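(* With $\lambda:=\frac{-\beta+\sqrt{-1}\sqrt{4\alpha-\beta^2}}{2}:\Omega\to\mathbb C$, the structure is rigid, i.e. $i_x+i\,i_y=0$ on $\Omega$, if and only if $\lambda_x+\lambda\,\lambda_y=0$ on $\Omega$ (ordinary complex multiplication and partial derivatives).
   Context: Let $\Omega\subset\mathbb R^2$ be open with coordinates $(x,y)$, and let $\alpha,\beta\in C^1(\Omega,\mathbb R)$ satisfy $\Delta:=4\alpha-\beta^2>0$ on $\Omega$. For $z\in\Omega$ let $A_z:=\mathbb R[X]/(X^2+\beta(z)X+\alpha(z))$ and let $i=i(z)$ denote the class of $X$, so $i^2+\beta i+\alpha=0$ and $\{1,i(z)\}$ is a real basis of $A_z$. In each fiber $2i+\beta$ is invertible with $(2i+\beta)^{-1}=(-\beta-2i)/\Delta$. The derivatives of the generator are the sections $i_x:=-(\alpha_x+\beta_x i)(2i+\beta)^{-1}$, $i_y:=-(\alpha_y+\beta_y i)(2i+\beta)^{-1}$. The structure is called rigid if $i_x+i\,i_y=0$ on $\Omega$. $\sqrt{-1}$ denotes the imaginary unit of $\mathbb C$. *)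

theory Defs
  imports "HOL-Analysis.Analysis"
begin

definition px :: "(real \<times> real \<Rightarrow> 'a::real_normed_vector) \<Rightarrow> real \<times> real \<Rightarrow> 'a" where
  "px f z = vector_derivative (\<lambda>t. f (t, snd z)) (at (fst z))"

definition py :: "(real \<times> real \<Rightarrow> 'a::real_normed_vector) \<Rightarrow> real \<times> real \<Rightarrow> 'a" where
  "py f z = vector_derivative (\<lambda>t. f (fst z, t)) (at (snd z))"

definition C1_on :: "(real \<times> real) set \<Rightarrow> (real \<times> real \<Rightarrow> real) \<Rightarrow> bool" where
  "C1_on \<Omega> f \<longleftrightarrow> (\<exists>f'. (\<forall>z\<in>\<Omega>. (f has_derivative blinfun_apply (f' z)) (at z))
                         \<and> continuous_on \<Omega> f')"

text \<open>The fiber algebra A_z = R[X]/(X^2 + b X + a) (a = alpha z, b = beta z); the element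
  p + q i is represented by the pair (p, q) in the basis {1, i}.  Since i^2 = - a - b i,
  (p + q i)(r + s i) = (pr - qs a) + (ps + qr - qs b) i.\<close>

definition amul :: "real \<Rightarrow> real \<Rightarrow> real \<times> real \<Rightarrow> real \<times> real \<Rightarrow> real \<times> real" where
  "amul a b u v = (fst u * fst v - snd u * snd v * a,
                   fst u * snd v + snd u * fst v - snd u * snd v * b)"

definition gen :: "real \<times> real" where "gen = (0, 1)"   \<comment> \<open>the class i of X\<close>

text \<open>(2i+beta)^{-1} = (-beta - 2i)/Delta, with Delta = 4 alpha - beta^2.\<close>
definition inv2ib :: "real \<Rightarrow> real \<Rightarrow> real \<times> real" where
  "inv2ib a b = (- b / (4*a - b^2), - 2 / (4*a - b^2))"

definition i_x :: "(real \<times> real \<Rightarrow> real) \<Rightarrow> (real \<times> real \<Rightarrow> real) \<Rightarrow> real \<times> real \<Rightarrow> real \<times> real" where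
  "i_x \<alpha> \<beta> z = - amul (\<alpha> z) (\<beta> z) (px \<alpha> z, px \<beta> z) (inv2ib (\<alpha> z) (\<beta> z))"

definition i_y :: "(real \<times> real \<Rightarrow> real) \<Rightarrow> (real \<times> real \<Rightarrow> real) \<Rightarrow> real \<times> real \<Rightarrow> real \<times> real" where
  "i_y \<alpha> \<beta> z = - amul (\<alpha> z) (\<beta> z) (py \<alpha> z, py \<beta> z) (inv2ib (\<alpha> z) (\<beta> z))"

definition rigid :: "(real \<times> real) set \<Rightarrow> (real \<times> real \<Rightarrow> real) \<Rightarrow> (real \<times> real \<Rightarrow> real) \<Rightarrow> bool" where
  "rigid \<Omega> \<alpha> \<beta> \<longleftrightarrow> (\<forall>z\<in>\<Omega>. i_x \<alpha> \<beta> z + amul (\<alpha> z) (\<beta> z) gen (i_y \<alpha> \<beta> z) = 0)"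

definition lam :: "(real \<times> real \<Rightarrow> real) \<Rightarrow> (real \<times> real \<Rightarrow> real) \<Rightarrow> real \<times> real \<Rightarrow> complex" where
  "lam \<alpha> \<beta> z = (- complex_of_real (\<beta> z) + \<i> * complex_of_real (sqrt (4 * \<alpha> z - (\<beta> z)^2))) / 2"

end

theory Submission
  imports Defs
begin

lemma partial_x:
  assumes "(f has_derivative f') (at z)" and "linear f'"
  shows "((\<lambda>t. f (t, snd z)) has_real_derivative f' (1,0)) (at (fst z))"
proof -
  have d: "((\<lambda>t. (t, snd z)) has_derivative (\<lambda>h. (h, 0))) (at (fst z))"
    by (auto intro!: derivative_eq_intros)
  have "((\<lambda>t. f (t, snd z)) has_derivative (\<lambda>h. f' (h,0))) (at (fst z))"
    using has_derivative_compose[OF d, of f f'] assms(1) by (cases z) (simp add: o_def)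
  moreover have "(\<lambda>h. f' (h,0)) = (*) (f' (1,0))"
  proof
    fix h :: real
    have "f' (h,0) = f' (h *\<^sub>R (1,0))" by simp
    also have "\<dots> = h *\<^sub>R f' (1,0)" using assms(2) linear_scale by blast
    finally show "f' (h,0) = f' (1,0) * h" by simp
  qed
  ultimately show ?thesis by (simp add: has_field_derivative_def)
qed

lemma partial_y:
  assumes "(f has_derivative f') (at z)" and "linear f'"
  shows "((\<lambda>t. f (fst z, t)) has_real_derivative f' (0,1)) (at (snd z))"
proof -
  have d: "((\<lambda>t. (fst z, t)) has_derivative (\<lambda>h. (0, h))) (at (snd z))"
    by (auto intro!: derivative_eq_intros)
  have "((\<lambda>t. f (fst z, t)) has_derivative (\<lambda>h. f' (0,h))) (at (snd z))"
    using has_derivative_compose[OF d, of f f'] assms(1) by (cases z) (simp add: o_def)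
  moreover have "(\<lambda>h. f' (0,h)) = (*) (f' (0,1))"
  proof
    fix h :: real
    have "f' (0,h) = f' (h *\<^sub>R (0,1))" by simp
    also have "\<dots> = h *\<^sub>R f' (0,1)" using assms(2) linear_scale by blast
    finally show "f' (0,h) = f' (0,1) * h" by simp
  qed
  ultimately show ?thesis by (simp add: has_field_derivative_def)
qed

lemma lam_deriv:
  assumes "(fa has_real_derivative ax) (at x)" "(fb has_real_derivative bx) (at x)"
    "4*fa x - (fb x)^2 > 0"
  shows "((\<lambda>t. (- complex_of_real (fb t) + \<i> * complex_of_real (sqrt (4 * fa t - (fb t)^2))) / 2)
    has_vector_derivative ((- of_real bx + \<i> * of_real ((4*ax - 2*fb x*bx)/(2 * sqrt(4*fa x - (fb x)^2))))/2)) (at x)"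
proof -
  have s: "((\<lambda>t. sqrt (4 * fa t - (fb t)^2)) has_real_derivative (4*ax - 2*fb x*bx)/(2 * sqrt(4*fa x - (fb x)^2))) (at x)"
  proof -
    have g: "((\<lambda>t. 4*fa t - (fb t)^2) has_real_derivative 4*ax - 2*fb x*bx) (at x)"
      using assms by (auto intro!: derivative_eq_intros)
    have "((\<lambda>t. sqrt (4 * fa t - (fb t)^2)) has_real_derivative inverse (sqrt (4*fa x - (fb x)^2)) / 2 * (4*ax - 2*fb x*bx)) (at x)"
      by (rule DERIV_chain2[OF DERIV_real_sqrt[OF assms(3)] g])
    then show ?thesis by (simp add: field_simps)
  qed
  show ?thesis
    by (intro has_vector_derivative_divide has_vector_derivative_add has_vector_derivative_minus
        has_vector_derivative_mult_right has_vector_derivative_of_real s assms)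
qed

lemma alg:
  fixes a b ax bx ay by' :: real
  assumes D: "4*a - b^2 > 0"
  defines "s \<equiv> sqrt (4*a - b^2)"
  defines "L \<equiv> (- complex_of_real b + \<i> * complex_of_real s) / 2"
  defines "Lx \<equiv> (- complex_of_real bx + \<i> * complex_of_real ((4*ax - 2*b*bx)/(2 * s)))/2"
  defines "Ly \<equiv> (- complex_of_real by' + \<i> * complex_of_real ((4*ay - 2*b*by')/(2 * s)))/2"
  shows "(- amul a b (ax,bx) (inv2ib a b) + amul a b gen (- amul a b (ay,by') (inv2ib a b)) = 0)
     \<longleftrightarrow> Lx + L*Ly = 0"
proof -
  define \<phi> where "\<phi> u = complex_of_real (fst u) + complex_of_real (snd u) * L" for u :: "real \<times> real"
  have sp: "s > 0" using D s_def by simp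
  have s2: "s^2 = 4*a - b^2" using D s_def by simp
  have ImL: "Im L = s/2" "Re L = -b/2" by (simp_all add: L_def)
  have inj: "\<phi> u = 0 \<longleftrightarrow> u = 0" for u
  proof
    assume "\<phi> u = 0"
    then have "Im (\<phi> u) = 0" "Re (\<phi> u) = 0" by simp_all
    then have "snd u * (s/2) = 0" "fst u + snd u * (-b/2) = 0" by (simp_all add: \<phi>_def ImL)
    then show "u = 0" using sp by (cases u) (auto simp: zero_prod_def)
  qed (simp add: \<phi>_def zero_prod_def)
  have add: "\<phi> (u + v) = \<phi> u + \<phi> v" for u v by (simp add: \<phi>_def algebra_simps)
  have neg: "\<phi> (- u) = - \<phi> u" for u by (simp add: \<phi>_def algebra_simps)
  have LL: "L * L = - of_real a - of_real b * L"
    using s2 by (simp add: L_def complex_eq_iff power2_eq_square field_simps)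
  have mul: "\<phi> (amul a b u v) = \<phi> u * \<phi> v" for u v
  proof -
    have "\<phi> u * \<phi> v = of_real (fst u * fst v) + of_real (fst u * snd v + snd u * fst v) * L
       + of_real (snd u * snd v) * (L * L)" by (simp add: \<phi>_def algebra_simps)
    also have "\<dots> = \<phi> (amul a b u v)" unfolding LL by (simp add: \<phi>_def amul_def algebra_simps)
    finally show ?thesis by simp
  qed
  have g: "\<phi> gen = L" by (simp add: \<phi>_def gen_def)
  have inv: "inv2ib a b = (-b/s^2, -2/s^2)" by (simp add: inv2ib_def s2)
  have aeq: "a = (s^2+b^2)/4" using s2 by simp
  have ex: "\<phi> (- amul a b (ax,bx) (inv2ib a b)) = Lx"
    unfolding inv using sp by (simp add: \<phi>_def amul_def aeq Lx_def L_def complex_eq_iff field_simps power2_eq_square)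
  have ey: "\<phi> (- amul a b (ay,by') (inv2ib a b)) = Ly"
    unfolding inv using sp by (simp add: \<phi>_def amul_def aeq Ly_def L_def complex_eq_iff field_simps power2_eq_square)
  show ?thesis
  proof -
    have "\<phi> (- amul a b (ax,bx) (inv2ib a b) + amul a b gen (- amul a b (ay,by') (inv2ib a b))) = Lx + L*Ly"
      unfolding add mul g ex ey ..
    then show ?thesis using inj by metis
  qed
qed

lemma pointwise:
  assumes "(\<alpha> has_derivative blinfun_apply A) (at z)" "(\<beta> has_derivative blinfun_apply B) (at z)"
    and D: "4 * \<alpha> z - (\<beta> z)^2 > 0"
  shows "(i_x \<alpha> \<beta> z + amul (\<alpha> z) (\<beta> z) gen (i_y \<alpha> \<beta> z) = 0) \<longleftrightarrow>
         px (lam \<alpha> \<beta>) z + lam \<alpha> \<beta> z * py (lam \<alpha> \<beta>) z = 0"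
proof -
  have lA: "linear (blinfun_apply A)" and lB: "linear (blinfun_apply B)"
    by (simp_all add: bounded_linear.linear blinfun.bounded_linear_right)
  note ax = partial_x[OF assms(1) lA] and bx = partial_x[OF assms(2) lB]
  note ay = partial_y[OF assms(1) lA] and by' = partial_y[OF assms(2) lB]
  have D': "4 * \<alpha> (fst z, snd z) - (\<beta> (fst z, snd z))^2 > 0" using D by simp
  have pax: "px \<alpha> z = blinfun_apply A (1,0)" unfolding px_def
    using ax by (simp add: has_real_derivative_iff_has_vector_derivative vector_derivative_at)
  have pbx: "px \<beta> z = blinfun_apply B (1,0)" unfolding px_def
    using bx by (simp add: has_real_derivative_iff_has_vector_derivative vector_derivative_at)
  have pay: "py \<alpha> z = blinfun_apply A (0,1)" unfolding py_def
    using ay by (simp add: has_real_derivative_iff_has_vector_derivative vector_derivative_at)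
  have pby: "py \<beta> z = blinfun_apply B (0,1)" unfolding py_def
    using by' by (simp add: has_real_derivative_iff_has_vector_derivative vector_derivative_at)
  have lx: "px (lam \<alpha> \<beta>) z = (- of_real (blinfun_apply B (1,0)) + \<i> * of_real ((4*blinfun_apply A (1,0) - 2*\<beta> z*blinfun_apply B (1,0))/(2 * sqrt(4*\<alpha> z - (\<beta> z)^2))))/2"
    unfolding px_def lam_def
    using vector_derivative_at[OF lam_deriv[OF ax bx D']] by simp
  have ly: "py (lam \<alpha> \<beta>) z = (- of_real (blinfun_apply B (0,1)) + \<i> * of_real ((4*blinfun_apply A (0,1) - 2*\<beta> z*blinfun_apply B (0,1))/(2 * sqrt(4*\<alpha> z - (\<beta> z)^2))))/2"
    unfolding py_def lam_def
    using vector_derivative_at[OF lam_deriv[OF ay by' D']] by simp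
  show ?thesis
    unfolding i_x_def i_y_def pax pbx pay pby lx ly
    using alg[OF D] by (simp add: lam_def)
qed

theorem proposition3p1:
  fixes \<Omega> :: "(real \<times> real) set" and \<alpha> \<beta> :: "real \<times> real \<Rightarrow> real"
  assumes "open \<Omega>" and "C1_on \<Omega> \<alpha>" and "C1_on \<Omega> \<beta>"
    and "\<forall>z\<in>\<Omega>. 4 * \<alpha> z - (\<beta> z)^2 > 0"
  shows "rigid \<Omega> \<alpha> \<beta> \<longleftrightarrow>
         (\<forall>z\<in>\<Omega>. px (lam \<alpha> \<beta>) z + lam \<alpha> \<beta> z * py (lam \<alpha> \<beta>) z = 0)"
proof -
  obtain A where A: "\<forall>z\<in>\<Omega>. (\<alpha> has_derivative blinfun_apply (A z)) (at z)"
    using assms(2) unfolding C1_on_def by blast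
  obtain B where B: "\<forall>z\<in>\<Omega>. (\<beta> has_derivative blinfun_apply (B z)) (at z)"
    using assms(3) unfolding C1_on_def by blast
  show ?thesis unfolding rigid_def
    using pointwise A B assms(4) by blast
qed

end
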